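(* Let $\lambda>0$, $X\in\mathbb R^{\mathbf m\times\mathbf n}$, and define on $\mathbb R^{\mathbf m\times\mathbf r}\times\mathbb R^{\mathbf r\times\mathbf n}$ $$f(U,V)=\tfrac12\|X-UV\|_F^2+\tfrac{\lambda}{2}\|I_{\mathbf r}-VV^\top\|_F^2,$$ $$\varphi_1(U,V)=\tfrac12\|U\|_F^2,\qquad \varphi_2(U,V)=\tfrac{6\lambda}{4}\|V\|_F^4+\tfrac12\varepsilon(U)\|V\|_F^2,\quad \varepsilon(U)=\max\{\|U^\top U\|,2\lambda\},$$ where $\|\cdot\|$ denotes the spectral norm. Then: (1) for every fixed $V$, the function $f(\cdot,V)$ is $(L_1(V),l_1)$-relatively smooth with respect to $\varphi_1(\cdot,V)$ with $L_1(V)=\|VV^\top\|$ and $l_1=0$, i.e. for all $U,U'$: $0\le f(U,V)-f(U',V)-\langle\nabla_Uf(U',V),U-U'\rangle\le \|VV^\top\|\,D_{\varphi_1(\cdot,V)}(U,U')$; (2) for every fixed $U$, the function $f(U,\cdot)$ is $(L_2,l_2)$-relatively smooth with respect to $\varphi_2(U,\cdot)$ with $L_2=1$ and $l_2=1$, i.e. for all $V,V'$: $-D_{\varphi_2(U,\cdot)}(V,V')\le f(U,V)-f(U,V')-\langle\nabla_Vf(U,V'),V-V'\rangle\le D_{\varphi_2(U,\cdot)}(V,V')$.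
   Context: Inner products on matrix spaces are the Frobenius (trace) inner product. For a differentiable convex $\psi$, the Bregman divergence is $D_\psi(x,y)=\psi(x)-\psi(y)-\langle\nabla\psi(y),x-y\rangle$. A function $\phi$ is $(L,l)$-relatively smooth with respect to $\psi$ if for all $x,y$: $-lD_\psi(x,y)\le\phi(x)-\phi(y)-\langle\nabla\phi(y),x-y\rangle\le LD_\psi(x,y)$. *)

theory Defs
  imports "HOL-Analysis.Analysis"
begin

text \<open>Matrices are elements of real^'c^'r (rows indexed by 'r); on this type
  norm is the Frobenius norm and the inner product is the Frobenius (trace) inner product.\<close>

definition grad :: "('a::real_inner \<Rightarrow> real) \<Rightarrow> 'a \<Rightarrow> 'a" where
  "grad f x = (SOME g. (f has_derivative (\<lambda>h. g \<bullet> h)) (at x))"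

definition bregman :: "('a::real_inner \<Rightarrow> real) \<Rightarrow> 'a \<Rightarrow> 'a \<Rightarrow> real" where
  "bregman psi x y = psi x - psi y - grad psi y \<bullet> (x - y)"

definition rel_smooth :: "('a::real_inner \<Rightarrow> real) \<Rightarrow> ('a \<Rightarrow> real) \<Rightarrow> real \<Rightarrow> real \<Rightarrow> bool" where
  "rel_smooth phi psi L l \<longleftrightarrow> (\<forall>x y.
      - l * bregman psi x y \<le> phi x - phi y - grad phi y \<bullet> (x - y) \<and>
      phi x - phi y - grad phi y \<bullet> (x - y) \<le> L * bregman psi x y)"

definition spec_norm :: "real^'n^'m \<Rightarrow> real" where
  "spec_norm A = onorm (\<lambda>x. A *v x)"

definition fobj :: "real \<Rightarrow> real^'n^'m \<Rightarrow> real^'r^'m \<Rightarrow> real^'n^'r \<Rightarrow> real" where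
  "fobj lam X U V = 1/2 * (norm (X - U ** V))^2 + lam/2 * (norm (mat 1 - V ** transpose V))^2"

definition phi1 :: "real^'r^'m \<Rightarrow> real^'n^'r \<Rightarrow> real" where
  "phi1 U V = 1/2 * (norm U)^2"

definition epsU :: "real \<Rightarrow> real^'r^'m \<Rightarrow> real" where
  "epsU lam U = max (spec_norm (transpose U ** U)) (2 * lam)"

definition phi2 :: "real \<Rightarrow> real^'r^'m \<Rightarrow> real^'n^'r \<Rightarrow> real" where
  "phi2 lam U V = 6 * lam / 4 * (norm V)^4 + 1/2 * epsU lam U * (norm V)^2"

end

theory Submission
  imports Defs
begin

lemma minner_sum: "(A::real^'n^'m) \<bullet> B = (\<Sum>i\<in>UNIV. \<Sum>j\<in>UNIV. A$i$j * B$i$j)"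
  by (simp add: inner_vec_def)

lemma mnorm_sq_rows: "(norm (A::real^'n^'m))^2 = (\<Sum>i\<in>UNIV. (norm (A$i))^2)"
  by (simp add: power2_norm_eq_inner inner_vec_def)

lemma vnorm_sq: "(norm (x::real^'n))^2 = (\<Sum>i\<in>UNIV. (x$i)^2)"
  unfolding power2_norm_eq_inner inner_vec_def by (simp add: power2_eq_square)

lemma norm_transpose: "norm (transpose (A::real^'n^'m)) = norm A"
proof -
  have "transpose A \<bullet> transpose A = (\<Sum>i\<in>UNIV. \<Sum>j\<in>UNIV. A$j$i * A$j$i)"
    by (simp add: minner_sum transpose_def)
  also have "\<dots> = (\<Sum>j\<in>UNIV. \<Sum>i\<in>UNIV. A$j$i * A$j$i)" by (rule sum.swap)
  also have "\<dots> = A \<bullet> A" by (simp add: minner_sum)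
  finally show ?thesis by (simp add: norm_eq_sqrt_inner)
qed

lemma mm_row: "((A::real^'k^'m) ** B) $ i = A$i v* B"
  by (simp add: matrix_matrix_mult_def vector_matrix_mult_def vec_eq_iff)

lemma mv_comp: "((A::real^'n^'m) *v x) $ i = A$i \<bullet> x"
  by (simp add: matrix_vector_mult_def inner_vec_def mult.commute)

lemma norm_mv_le: "norm ((A::real^'n^'m) *v x) \<le> norm A * norm x"
proof -
  have "(norm (A *v x))^2 = (\<Sum>i\<in>UNIV. (A$i \<bullet> x)^2)"
    by (simp add: vnorm_sq mv_comp)
  also have "\<dots> \<le> (\<Sum>i\<in>UNIV. (norm (A$i))^2 * (norm x)^2)"
  proof (rule sum_mono)
    fix i
    have "(A$i \<bullet> x)^2 \<le> (norm (A$i) * norm x)^2"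
      using abs_le_square_iff[of "A$i \<bullet> x" "norm (A$i) * norm x"] Cauchy_Schwarz_ineq2[of "A$i" x] by simp
    then show "(A$i \<bullet> x)^2 \<le> (norm (A$i))^2 * (norm x)^2" by (simp add: power_mult_distrib)
  qed
  also have "\<dots> = (norm A * norm x)^2"
    by (simp add: mnorm_sq_rows power_mult_distrib sum_distrib_right)
  finally show ?thesis by (rule power2_le_imp_le) simp
qed

lemma vm_eq: "(x::real^'m) v* (B::real^'n^'m) = transpose B *v x"
  by simp

lemma norm_mm_le: "norm ((A::real^'k^'m) ** (B::real^'n^'k)) \<le> norm A * norm B"
proof -
  have "(norm (A ** B))^2 = (\<Sum>i\<in>UNIV. (norm (transpose B *v A$i))^2)"
    by (simp add: mnorm_sq_rows mm_row)
  also have "\<dots> \<le> (\<Sum>i\<in>UNIV. (norm B)^2 * (norm (A$i))^2)"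
  proof (rule sum_mono)
    fix i
    have "norm (transpose B *v A$i) \<le> norm B * norm (A$i)"
      using norm_mv_le[of "transpose B" "A$i"] by (simp add: norm_transpose)
    then show "(norm (transpose B *v A$i))^2 \<le> (norm B)^2 * (norm (A$i))^2"
      using power_mono[OF _ norm_ge_zero, of "norm (transpose B *v A$i)" "norm B * norm (A$i)" 2]
      by (simp add: power_mult_distrib)
  qed
  also have "\<dots> = (norm A * norm B)^2"
    by (simp add: mnorm_sq_rows power_mult_distrib sum_distrib_left mult.commute)
  finally show ?thesis by (rule power2_le_imp_le) simp
qed

lemma matrix_add_rdistrib': "((B::real^'k^'m) + C) ** (A::real^'n^'k) = B ** A + C ** A"
  by (simp add: matrix_matrix_mult_def vec_eq_iff distrib_right sum.distrib)

lemma transpose_add': "transpose ((A::real^'n^'m) + B) = transpose A + transpose B"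
  by (simp add: transpose_def vec_eq_iff)

lemma transpose_diff': "transpose ((A::real^'n^'m) - B) = transpose A - transpose B"
  by (simp add: transpose_def vec_eq_iff)

lemma bb_mm: "bounded_bilinear (\<lambda>(A::real^'k^'m) (B::real^'n^'k). A ** B)"
proof
  fix a a' :: "real^'k^'m" and b b' :: "real^'n^'k" and r :: real
  show "(a + a') ** b = a ** b + a' ** b" by (rule matrix_add_rdistrib')
  show "a ** (b + b') = a ** b + a ** b'" by (rule matrix_add_ldistrib)
  show "(r *\<^sub>R a) ** b = r *\<^sub>R (a ** b)" by (simp add: scalar_matrix_assoc)
  show "a ** (r *\<^sub>R b) = r *\<^sub>R (a ** b)" by (simp add: matrix_scalar_ac scalar_matrix_assoc)
next
  show "\<exists>K. \<forall>(a::real^'k^'m) (b::real^'n^'k). norm (a ** b) \<le> norm a * norm b * K"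
    by (rule exI[of _ 1]) (simp add: norm_mm_le)
qed

lemma bl_transpose: "bounded_linear (transpose :: real^'n^'m \<Rightarrow> real^'m^'n)"
proof -
  have "linear (transpose :: real^'n^'m \<Rightarrow> real^'m^'n)"
    by (rule linearI) (simp_all add: transpose_add' transpose_scalar)
  then show ?thesis by (simp add: linear_conv_bounded_linear)
qed


lemma grad_eq:
  fixes f :: "'a::euclidean_space \<Rightarrow> real"
  assumes d: "(f has_derivative F) (at x)"
  shows "grad f x \<bullet> h = F h"
proof -
  have lin: "linear F" using d has_derivative_linear by blast
  have rep: "F = (\<lambda>h. adjoint F 1 \<bullet> h)"
    using adjoint_works[OF lin, of _ 1] by (simp add: fun_eq_iff inner_commute)
  have ex: "\<exists>g. (f has_derivative (\<lambda>h. g \<bullet> h)) (at x)"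
    by (rule exI[of _ "adjoint F 1"], subst rep[symmetric], rule d)
  have "(f has_derivative (\<lambda>h. grad f x \<bullet> h)) (at x)"
    unfolding grad_def by (rule someI_ex[OF ex])
  then have "(\<lambda>h. grad f x \<bullet> h) = F" using d has_derivative_unique by blast
  then show ?thesis using fun_cong[of "\<lambda>h. grad f x \<bullet> h" F h] by simp
qed

lemma d_sq_comp:
  fixes f :: "'a::real_normed_vector \<Rightarrow> 'b::real_inner"
  assumes "(f has_derivative f') (at y)"
  shows "((\<lambda>x. f x \<bullet> f x) has_derivative (\<lambda>h. 2 * (f y \<bullet> f' h))) (at y)"
  by (rule has_derivative_eq_rhs, rule has_derivative_inner[OF assms assms])
     (simp add: fun_eq_iff inner_commute)

lemma d_mm_left: "((\<lambda>H. (H::real^'k^'m) ** (V::real^'n^'k)) has_derivative (\<lambda>H. H ** V)) F"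
  by (rule bounded_linear.has_derivative[OF bounded_bilinear.bounded_linear_left[OF bb_mm] has_derivative_ident])

lemma d_mm_right: "((\<lambda>H. (U::real^'k^'m) ** (H::real^'n^'k)) has_derivative (\<lambda>H. U ** H)) F"
  by (rule bounded_linear.has_derivative[OF bounded_bilinear.bounded_linear_right[OF bb_mm] has_derivative_ident])

lemma d_gram: "((\<lambda>V. (V::real^'n^'r) ** transpose V) has_derivative (\<lambda>H. Y ** transpose H + H ** transpose Y)) (at Y)"
  by (rule bounded_bilinear.FDERIV[OF bb_mm has_derivative_ident
        bounded_linear.has_derivative[OF bl_transpose has_derivative_ident]])

lemma spec_bound: "(norm ((A::real^'n^'m) *v x))^2 \<le> spec_norm (transpose A ** A) * (norm x)^2"
proof -
  have e1: "(A *v x) \<bullet> (A *v x) = x \<bullet> ((transpose A ** A) *v x)"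
  proof -
    have "A *v x = x v* transpose A"
      using transpose_matrix_vector[of "transpose A" x] by simp
    then have "(A *v x) \<bullet> (A *v x) = x \<bullet> (transpose A *v (A *v x))"
      by (simp only: dot_lmul_matrix)
    then show ?thesis by (simp only: matrix_vector_mul_assoc)
  qed
  have "x \<bullet> ((transpose A ** A) *v x) \<le> norm x * norm ((transpose A ** A) *v x)"
    by (rule norm_cauchy_schwarz)
  also have "\<dots> \<le> norm x * (spec_norm (transpose A ** A) * norm x)"
    unfolding spec_norm_def by (rule mult_left_mono[OF onorm[OF matrix_vector_mul_bounded_linear]]) simp
  finally have c: "x \<bullet> ((transpose A ** A) *v x) \<le> norm x * (spec_norm (transpose A ** A) * norm x)" .
  have "(norm (A *v x))^2 = x \<bullet> ((transpose A ** A) *v x)" using e1 by (simp only: power2_norm_eq_inner)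
  then show ?thesis using c by (simp add: power2_eq_square mult_ac)
qed

lemma rows_bound: "(norm ((D::real^'k^'m) ** (V::real^'n^'k)))^2 \<le> spec_norm (V ** transpose V) * (norm D)^2"
proof -
  have "(norm (D ** V))^2 = (\<Sum>i\<in>UNIV. (norm (transpose V *v D$i))^2)"
    by (simp add: mnorm_sq_rows mm_row)
  also have "\<dots> \<le> (\<Sum>i\<in>UNIV. spec_norm (V ** transpose V) * (norm (D$i))^2)"
  proof (rule sum_mono)
    fix i show "(norm (transpose V *v D$i))^2 \<le> spec_norm (V ** transpose V) * (norm (D$i))^2"
      using spec_bound[of "transpose V" "D$i"] by (simp only: transpose_transpose)
  qed
  also have "\<dots> = spec_norm (V ** transpose V) * (norm D)^2"
    by (simp add: mnorm_sq_rows sum_distrib_left)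
  finally show ?thesis .
qed

lemma cols_bound: "(norm ((U::real^'k^'m) ** (D::real^'n^'k)))^2 \<le> spec_norm (transpose U ** U) * (norm D)^2"
proof -
  have "norm (U ** D) = norm (transpose D ** transpose U)"
    using norm_transpose[of "U ** D"] by (simp only: matrix_transpose_mul)
  then show ?thesis using rows_bound[of "transpose D" "transpose U"] by (simp add: norm_transpose)
qed

lemma tr1: "mat 1 \<bullet> ((D::real^'n^'r) ** transpose D) = (norm D)^2"
  unfolding power2_norm_eq_inner minner_sum
  by (simp add: mat_def matrix_matrix_mult_def transpose_def inner_vec_def if_distrib if_distribR
      sum.delta cong: if_cong)

lemma tr2: "((Y::real^'n^'r) ** transpose Y) \<bullet> ((D::real^'n^'r) ** transpose D) = (norm (transpose Y ** D))^2"
proof -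
  have L: "(Y ** transpose Y) \<bullet> (D ** transpose D) =
     (\<Sum>i\<in>UNIV. \<Sum>j\<in>UNIV. (\<Sum>k\<in>UNIV. Y$i$k * Y$j$k) * (\<Sum>l\<in>UNIV. D$i$l * D$j$l))"
    unfolding minner_sum by (simp add: matrix_matrix_mult_def transpose_def)
  also have "\<dots> = (\<Sum>i\<in>UNIV. \<Sum>j\<in>UNIV. \<Sum>k\<in>UNIV. \<Sum>l\<in>UNIV. (Y$i$k * Y$j$k) * (D$i$l * D$j$l))"
    by (simp only: sum_product)
  finally have L: "(Y ** transpose Y) \<bullet> (D ** transpose D) = \<dots>" .
  have "(norm (transpose Y ** D))^2 =
     (\<Sum>k\<in>UNIV. \<Sum>l\<in>UNIV. (\<Sum>i\<in>UNIV. Y$i$k * D$i$l) * (\<Sum>j\<in>UNIV. Y$j$k * D$j$l))"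
    unfolding power2_norm_eq_inner minner_sum by (simp add: matrix_matrix_mult_def transpose_def)
  also have "\<dots> = (\<Sum>k\<in>UNIV. \<Sum>l\<in>UNIV. \<Sum>i\<in>UNIV. \<Sum>j\<in>UNIV. (Y$i$k * D$i$l) * (Y$j$k * D$j$l))"
    by (simp only: sum_product)
  also have "\<dots> = (\<Sum>k\<in>UNIV. \<Sum>i\<in>UNIV. \<Sum>l\<in>UNIV. \<Sum>j\<in>UNIV. (Y$i$k * D$i$l) * (Y$j$k * D$j$l))"
    by (rule sum.cong[OF refl], rule sum.swap)
  also have "\<dots> = (\<Sum>i\<in>UNIV. \<Sum>k\<in>UNIV. \<Sum>l\<in>UNIV. \<Sum>j\<in>UNIV. (Y$i$k * D$i$l) * (Y$j$k * D$j$l))"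
    by (rule sum.swap)
  also have "\<dots> = (\<Sum>i\<in>UNIV. \<Sum>k\<in>UNIV. \<Sum>j\<in>UNIV. \<Sum>l\<in>UNIV. (Y$i$k * D$i$l) * (Y$j$k * D$j$l))"
    by (intro sum.cong refl, rule sum.swap)
  also have "\<dots> = (\<Sum>i\<in>UNIV. \<Sum>j\<in>UNIV. \<Sum>k\<in>UNIV. \<Sum>l\<in>UNIV. (Y$i$k * D$i$l) * (Y$j$k * D$j$l))"
    by (rule sum.cong[OF refl], rule sum.swap)
  also have "\<dots> = (\<Sum>i\<in>UNIV. \<Sum>j\<in>UNIV. \<Sum>k\<in>UNIV. \<Sum>l\<in>UNIV. (Y$i$k * Y$j$k) * (D$i$l * D$j$l))"
    by (intro sum.cong refl) (simp only: mult_ac)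
  finally show ?thesis using L by simp
qed

lemma key_ineq:
  fixes lam e n qq t sy a d :: real
  assumes "lam > 0" "2*lam \<le> e" "0 \<le> n" "n \<le> e*d" "0 \<le> qq" "qq \<le> 4*(sy + a + d/4)*d"
    "0 \<le> t" "t \<le> sy*d" "0 \<le> d" "0 \<le> sy"
  shows "- 1 * (6*lam/4*((sy+2*a+d)*(sy+2*a+d)) + 1/2*e*(sy+2*a+d) - (6*lam/4*(sy* sy) + 1/2*e* sy)
            - (6*lam/4*(sy*(2*a) + 2*a* sy) + 1/2*e*(2*a))) \<le> 1/2*n + lam/2*qq - lam*(d - t)
       \<and> 1/2*n + lam/2*qq - lam*(d - t) \<le> 1 * (6*lam/4*((sy+2*a+d)*(sy+2*a+d)) + 1/2*e*(sy+2*a+d)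
            - (6*lam/4*(sy* sy) + 1/2*e* sy) - (6*lam/4*(sy*(2*a) + 2*a* sy) + 1/2*e*(2*a)))"
proof -
  define Bp where "Bp = 6*lam/4*((sy+2*a+d)*(sy+2*a+d)) + 1/2*e*(sy+2*a+d) - (6*lam/4*(sy* sy) + 1/2*e* sy)
            - (6*lam/4*(sy*(2*a) + 2*a* sy) + 1/2*e*(2*a))"
  have h1: "Bp = 6*lam/4*((2*a+d)^2 + 2* sy*d) + e/2*d"
    unfolding Bp_def by (simp add: field_simps power2_eq_square)
  have h2: "lam*((2*a+d)^2 + 2* sy*d) \<ge> 0" using assms by simp
  have h3: "lam*qq \<le> lam*(4*(sy+a+d/4)*d)" using assms by (simp add: mult_left_mono)
  have h4: "lam*t \<le> lam*(sy*d)" using assms by (simp add: mult_left_mono)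
  have h5: "lam*(6*a^2+4*a*d+d^2+d) \<ge> 0"
  proof -
    have "6*a^2+4*a*d+d^2+d = (2*a+d)^2 + 2*a^2 + d" by (simp add: power2_eq_square algebra_simps)
    also have "\<dots> \<ge> 0" using assms by simp
    finally show ?thesis using assms by simp
  qed
  have h6: "Bp - (e/2*d + lam*(4*(sy+a+d/4)*d)/2 - lam*d + lam*(sy*d)) = lam*(6*a^2+4*a*d+d^2+d)"
    unfolding h1 by (simp add: field_simps power2_eq_square)
  have h7: "e/2*d \<ge> lam * d" using mult_right_mono[OF assms(2) assms(9)] by simp
  have a1: "6*lam/4*((2*a+d)^2 + 2* sy * d) \<ge> 0"
    by (intro mult_nonneg_nonneg add_nonneg_nonneg) (use assms in auto)
  have a2: "lam/2*qq \<ge> 0" using assms by simp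
  have a3: "lam*(d-t) \<le> lam*d" using assms by (simp add: mult_left_mono)
  have a4: "1/2*n \<ge> 0" using assms by simp
  have lo: "- 1 * Bp \<le> 1/2*n + lam/2*qq - lam*(d - t)"
    using h1 h7 a1 a2 a3 a4 by linarith
  have b1: "1/2*n \<le> e/2*d" using assms(4) by simp
  have b2: "lam/2*qq \<le> lam*(4*(sy+a+d/4)*d)/2" using h3 by simp
  have b3: "- (lam*(d-t)) \<le> - (lam*d) + lam*(sy*d)" using h4 by (simp add: right_diff_distrib)
  have up: "1/2*n + lam/2*qq - lam*(d - t) \<le> 1 * Bp"
    using h5 h6 b1 b2 b3 by linarith
  show ?thesis using lo up unfolding Bp_def by (rule conjI)
qed

theorem proposition5p1:
  fixes lam :: real and X :: "real^'n^'m"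
  assumes "lam > 0"
  shows "(\<forall>V :: real^'n^'r. rel_smooth (\<lambda>U :: real^'r^'m. fobj lam X U V) (\<lambda>U. phi1 U V)
              (spec_norm (V ** transpose V)) 0)
       \<and> (\<forall>U :: real^'r^'m. rel_smooth (\<lambda>V :: real^'n^'r. fobj lam X U V) (\<lambda>V. phi2 lam U V) 1 1)"
proof (intro conjI allI)
  fix V :: "real^'n^'r"
  show "rel_smooth (\<lambda>U :: real^'r^'m. fobj lam X U V) (\<lambda>U. phi1 U V) (spec_norm (V ** transpose V)) 0"
    unfolding rel_smooth_def bregman_def
  proof (intro allI)
    fix U Y :: "real^'r^'m"
    define D where "D = U - Y"
    have UD: "U = Y + D" unfolding D_def by simp
    define c where "c = lam/2 * (norm (mat 1 - V ** transpose V))^2"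
    have feq: "(\<lambda>U. fobj lam X U V) = (\<lambda>U. 1/2 * ((X - U ** V) \<bullet> (X - U ** V)) + c)"
      by (simp add: fun_eq_iff fobj_def c_def power2_norm_eq_inner)
    have g1: "grad (\<lambda>U. fobj lam X U V) Y \<bullet> D = 1/2 * (2 * ((X - Y ** V) \<bullet> (0 - D ** V))) + 0"
      unfolding feq
      by (rule grad_eq[OF has_derivative_add[OF has_derivative_mult_right[OF
            d_sq_comp[OF has_derivative_diff[OF has_derivative_const d_mm_left]]] has_derivative_const]])
    have peq: "(\<lambda>U. phi1 U V) = (\<lambda>U. 1/2 * (U \<bullet> U))"
      by (simp add: fun_eq_iff phi1_def power2_norm_eq_inner)
    have g2: "grad (\<lambda>U. phi1 U V) Y \<bullet> D = 1/2 * (2 * (Y \<bullet> D))"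
      unfolding peq
      by (rule grad_eq[OF has_derivative_mult_right[OF d_sq_comp[OF has_derivative_ident]]])
    define E where "E = X - Y ** V"
    define W where "W = D ** V"
    have XU: "X - U ** V = E - W" unfolding E_def W_def UD by (simp add: matrix_add_rdistrib')
    have Dphi: "fobj lam X U V - fobj lam X Y V - grad (\<lambda>U. fobj lam X U V) Y \<bullet> (U - Y) = 1/2 * (norm W)^2"
    proof -
      have fU: "fobj lam X U V = 1/2*((E - W) \<bullet> (E - W)) + c"
        unfolding fobj_def c_def XU by (simp add: power2_norm_eq_inner)
      have fY: "fobj lam X Y V = 1/2*(E \<bullet> E) + c"
        unfolding fobj_def c_def E_def by (simp add: power2_norm_eq_inner)
      have g1': "grad (\<lambda>U. fobj lam X U V) Y \<bullet> (U - Y) = - (E \<bullet> W)"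
        using g1 unfolding D_def E_def W_def by simp
      have "fobj lam X U V - fobj lam X Y V - grad (\<lambda>U. fobj lam X U V) Y \<bullet> (U - Y)
          = 1/2 * ((E - W) \<bullet> (E - W)) - 1/2 * (E \<bullet> E) + E \<bullet> W"
        unfolding fU fY g1' by simp
      also have "\<dots> = 1/2 * (W \<bullet> W)"
        by (simp add: inner_diff_left inner_diff_right inner_commute algebra_simps)
      finally show ?thesis by (simp add: power2_norm_eq_inner)
    qed
    have Bphi: "phi1 U V - phi1 Y V - grad (\<lambda>U. phi1 U V) Y \<bullet> (U - Y) = 1/2 * (norm D)^2"
    proof -
      have "phi1 U V - phi1 Y V - grad (\<lambda>U. phi1 U V) Y \<bullet> (U - Y)
          = 1/2 * ((Y + D) \<bullet> (Y + D)) - 1/2 * (Y \<bullet> Y) - Y \<bullet> D"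
        using g2 unfolding D_def by (simp add: phi1_def power2_norm_eq_inner)
      also have "\<dots> = 1/2 * (D \<bullet> D)"
        by (simp add: inner_add_left inner_add_right inner_commute algebra_simps)
      finally show ?thesis by (simp add: power2_norm_eq_inner)
    qed
    have rb: "(norm W)^2 \<le> spec_norm (V ** transpose V) * (norm D)^2"
      unfolding W_def by (rule rows_bound)
    show "- 0 * (phi1 U V - phi1 Y V - grad (\<lambda>U. phi1 U V) Y \<bullet> (U - Y))
           \<le> fobj lam X U V - fobj lam X Y V - grad (\<lambda>U. fobj lam X U V) Y \<bullet> (U - Y) \<and>
          fobj lam X U V - fobj lam X Y V - grad (\<lambda>U. fobj lam X U V) Y \<bullet> (U - Y)
           \<le> spec_norm (V ** transpose V) * (phi1 U V - phi1 Y V - grad (\<lambda>U. phi1 U V) Y \<bullet> (U - Y))"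
      unfolding Dphi Bphi using rb by simp
  qed
next
  fix U :: "real^'r^'m"
  show "rel_smooth (\<lambda>V :: real^'n^'r. fobj lam X U V) (\<lambda>V. phi2 lam U V) 1 1"
    unfolding rel_smooth_def bregman_def
  proof (intro allI)
    fix V Y :: "real^'n^'r"
    define D where "D = V - Y"
    have VD: "V = Y + D" unfolding D_def by simp
    define fa where "fa = (\<lambda>V::real^'n^'r. X - U ** V)"
    define fb where "fb = (\<lambda>V::real^'n^'r. mat 1 - V ** transpose V)"
    define e where "e = epsU lam U"
    have feq: "(\<lambda>V. fobj lam X U V) = (\<lambda>V. 1/2 * (fa V \<bullet> fa V) + lam/2 * (fb V \<bullet> fb V))"
      by (simp add: fun_eq_iff fobj_def fa_def fb_def power2_norm_eq_inner)
    have da: "(fa has_derivative (\<lambda>h. 0 - U ** h)) (at Y)"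
      unfolding fa_def by (rule has_derivative_diff[OF has_derivative_const d_mm_right])
    have db: "(fb has_derivative (\<lambda>h. 0 - (Y ** transpose h + h ** transpose Y))) (at Y)"
      unfolding fb_def by (rule has_derivative_diff[OF has_derivative_const d_gram])
    have g1: "grad (\<lambda>V. fobj lam X U V) Y \<bullet> D = 1/2 * (2 * (fa Y \<bullet> (0 - U ** D)))
        + lam/2 * (2 * (fb Y \<bullet> (0 - (Y ** transpose D + D ** transpose Y))))"
      unfolding feq
      by (rule grad_eq[OF has_derivative_add[OF has_derivative_mult_right[OF d_sq_comp[OF da]]
            has_derivative_mult_right[OF d_sq_comp[OF db]]]])
    have peq: "(\<lambda>V::real^'n^'r. phi2 lam U V) = (\<lambda>V. 6*lam/4 * ((V \<bullet> V) * (V \<bullet> V)) + 1/2 * e * (V \<bullet> V))"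
    proof -
      have n4: "(norm x)^4 = (x \<bullet> x) * (x \<bullet> x)" for x :: "real^'n^'r"
      proof -
        have "(norm x)^4 = (norm x)^2 * (norm x)^2" by (simp add: eval_nat_numeral)
        also have "\<dots> = (x \<bullet> x) * (x \<bullet> x)" by (simp only: power2_norm_eq_inner)
        finally show ?thesis .
      qed
      show ?thesis
      proof (rule ext)
        fix x :: "real^'n^'r"
        show "phi2 lam U x = 6*lam/4 * ((x \<bullet> x) * (x \<bullet> x)) + 1/2 * e * (x \<bullet> x)"
          unfolding phi2_def e_def n4[of x] power2_norm_eq_inner by (rule refl)
      qed
    qed
    have dss: "((\<lambda>x::real^'n^'r. x \<bullet> x) has_derivative (\<lambda>h. 2 * (Y \<bullet> h))) (at Y)"
      using d_sq_comp[OF has_derivative_ident] .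
    have g2: "grad (\<lambda>V. phi2 lam U V) Y \<bullet> D = 6*lam/4 * ((Y \<bullet> Y) * (2 * (Y \<bullet> D)) + 2 * (Y \<bullet> D) * (Y \<bullet> Y))
        + 1/2 * e * (2 * (Y \<bullet> D))"
      unfolding peq
      by (rule grad_eq[OF has_derivative_add[OF has_derivative_mult_right[OF has_derivative_mult[OF dss dss]]
            has_derivative_mult_right[OF dss]]])
    define sy where "sy = Y \<bullet> Y"
    define a where "a = Y \<bullet> D"
    define d where "d = D \<bullet> D"
    define n where "n = (norm (U ** D))^2"
    define Bm where "Bm = Y ** transpose D + D ** transpose Y"
    define Q where "Q = Bm + D ** transpose D"
    define qq where "qq = Q \<bullet> Q"
    define t where "t = (norm (transpose Y ** D))^2"
    have VV: "V \<bullet> V = sy + 2*a + d"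
      unfolding VD sy_def a_def d_def by (simp add: inner_add_left inner_add_right inner_commute)
    have faV: "fa V = fa Y - U ** D" unfolding fa_def VD by (simp add: matrix_add_ldistrib)
    have fbV: "fb V = fb Y - Q" unfolding fb_def VD Q_def Bm_def
      by (simp add: matrix_add_ldistrib matrix_add_rdistrib' transpose_add' algebra_simps)
    have fbDD: "fb Y \<bullet> (D ** transpose D) = d - t"
      unfolding fb_def t_def d_def using tr1[of D] tr2[of Y D]
      by (simp add: inner_diff_left power2_norm_eq_inner)
    have Dg: "fobj lam X U V - fobj lam X U Y - grad (\<lambda>V. fobj lam X U V) Y \<bullet> (V - Y)
        = 1/2*n + lam/2*qq - lam*(d - t)"
    proof -
      have "fobj lam X U V - fobj lam X U Y - grad (\<lambda>V. fobj lam X U V) Y \<bullet> (V - Y)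
        = 1/2 * (fa V \<bullet> fa V) + lam/2 * (fb V \<bullet> fb V) - (1/2 * (fa Y \<bullet> fa Y) + lam/2 * (fb Y \<bullet> fb Y))
          - (1/2 * (2 * (fa Y \<bullet> (0 - U ** D))) + lam/2 * (2 * (fb Y \<bullet> (0 - Bm))))"
        using g1 feq unfolding D_def Bm_def by (simp add: fun_eq_iff)
      also have "\<dots> = 1/2 * ((U ** D) \<bullet> (U ** D)) + lam/2 * (Q \<bullet> Q) - lam * (fb Y \<bullet> (D ** transpose D))"
        unfolding faV fbV Q_def
        by (simp add: inner_diff_left inner_diff_right inner_add_left inner_add_right inner_commute algebra_simps)
      finally show ?thesis unfolding fbDD n_def qq_def by (simp add: power2_norm_eq_inner)
    qed
    have Bp: "phi2 lam U V - phi2 lam U Y - grad (\<lambda>V. phi2 lam U V) Y \<bullet> (V - Y)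
      = 6*lam/4*((sy+2*a+d)*(sy+2*a+d)) + 1/2*e*(sy+2*a+d) - (6*lam/4*(sy* sy) + 1/2*e* sy)
            - (6*lam/4*(sy*(2*a) + 2*a* sy) + 1/2*e*(2*a))"
    proof -
      have "phi2 lam U V = 6*lam/4*((sy+2*a+d)*(sy+2*a+d)) + 1/2*e*(sy+2*a+d)"
        using peq VV by (metis)
      moreover have "phi2 lam U Y = 6*lam/4*(sy* sy) + 1/2*e* sy"
        using peq sy_def by metis
      moreover have "grad (\<lambda>V. phi2 lam U V) Y \<bullet> (V - Y) = 6*lam/4*(sy*(2*a) + 2*a* sy) + 1/2*e*(2*a)"
        using g2 unfolding D_def sy_def a_def by simp
      ultimately show ?thesis by simp
    qed
    have e_ge: "spec_norm (transpose U ** U) \<le> e" "2*lam \<le> e" unfolding e_def epsU_def by auto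
    have dn: "d = (norm D)^2" unfolding d_def by (simp add: power2_norm_eq_inner)
    have sn: "sy = (norm Y)^2" unfolding sy_def by (simp add: power2_norm_eq_inner)
    have n0: "0 \<le> n" unfolding n_def by simp
    have n1: "n \<le> e*d"
    proof -
      have "n \<le> spec_norm (transpose U ** U) * d" unfolding n_def dn by (rule cols_bound)
      also have "\<dots> \<le> e * d" using e_ge dn by (simp add: mult_right_mono)
      finally show ?thesis .
    qed
    have q0: "0 \<le> qq" unfolding qq_def by simp
    have q1: "qq \<le> 4*(sy + a + d/4)*d"
    proof -
      define Z where "Z = Y + (1/2) *\<^sub>R D"
      have QZ: "Q = Z ** transpose D + D ** transpose Z"
        unfolding Q_def Bm_def Z_def
        by (simp add: matrix_add_ldistrib matrix_add_rdistrib' transpose_add' transpose_scalar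
            matrix_scalar_ac scalar_matrix_assoc[symmetric] algebra_simps)
      have n1: "norm (Z ** transpose D) \<le> norm Z * norm D"
        using norm_mm_le[of Z "transpose D"] by (simp add: norm_transpose)
      have n2: "norm (D ** transpose Z) \<le> norm Z * norm D"
        using norm_mm_le[of D "transpose Z"] by (simp add: norm_transpose mult.commute)
      have "norm Q \<le> 2 * (norm Z * norm D)"
        using norm_triangle_ineq[of "Z ** transpose D" "D ** transpose Z"] n1 n2 unfolding QZ by linarith
      then have "(norm Q)^2 \<le> (2 * (norm Z * norm D))^2" by (rule power_mono) simp
      also have "\<dots> = 4 * (Z \<bullet> Z) * d" by (simp add: dn power_mult_distrib power2_norm_eq_inner)
      also have "Z \<bullet> Z = sy + a + d/4"
        unfolding Z_def sy_def a_def d_def by (simp add: inner_add_left inner_add_right inner_commute algebra_simps)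
      finally show ?thesis unfolding qq_def by (simp add: power2_norm_eq_inner)
    qed
    have t0: "0 \<le> t" unfolding t_def by simp
    have t1: "t \<le> sy * d"
    proof -
      have "norm (transpose Y ** D) \<le> norm Y * norm D"
        using norm_mm_le[of "transpose Y" D] by (simp add: norm_transpose)
      then have "t \<le> (norm Y * norm D)^2" unfolding t_def by (rule power_mono) simp
      then show ?thesis by (simp add: sn dn power_mult_distrib)
    qed
    have d0: "0 \<le> d" "0 \<le> sy" unfolding d_def sy_def by simp_all
    show "- 1 * (phi2 lam U V - phi2 lam U Y - grad (\<lambda>V. phi2 lam U V) Y \<bullet> (V - Y))
           \<le> fobj lam X U V - fobj lam X U Y - grad (\<lambda>V. fobj lam X U V) Y \<bullet> (V - Y) \<and>
          fobj lam X U V - fobj lam X U Y - grad (\<lambda>V. fobj lam X U V) Y \<bullet> (V - Y)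
           \<le> 1 * (phi2 lam U V - phi2 lam U Y - grad (\<lambda>V. phi2 lam U V) Y \<bullet> (V - Y))"
      unfolding Dg Bp
      by (rule key_ineq[OF assms e_ge(2) n0 n1 q0 q1 t0 t1 d0])
  qed
qed

end
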